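(* Let $\ell$ be a prime and let $G$ be a subgroup of $\mathrm{GSp}_4(\mathbb{F}_\ell)$ maximal among Hasse subgroups of $\mathrm{GSp}_4(\mathbb{F}_\ell)$, such that $G\cap\mathrm{Sp}_4(\mathbb{F}_\ell)$ acts reducibly on $\mathbb{F}_\ell^4$. Then $\lambda(G)=\mathbb{F}_\ell^\times$.
   Context: Fix a non-degenerate alternating form on $\mathbb{F}_\ell^4$ with matrix $J$. $\mathrm{GSp}_4(\mathbb{F}_\ell)=\{M\in\mathrm{GL}_4(\mathbb{F}_\ell): M^TJM=kJ\text{ for some }k\in\mathbb{F}_\ell^\times\}$, with multiplier $\lambda(M)=k$, and $\mathrm{Sp}_4(\mathbb{F}_\ell)=\ker\lambda$. A subgroup of $\mathrm{GL}_n(\mathbb{F}_\ell)$ is Hasse if it acts irreducibly on $\mathbb{F}_\ell^n$ and each of its elements has an eigenvalue in $\mathbb{F}_\ell$. *)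

theory Defs
  imports "HOL-Analysis.Analysis"
begin

text \<open>Matrices over a field 'a act on column vectors 'a^'n.
  J is the Gram matrix of the fixed non-degenerate alternating form.\<close>

definition alternating_nondeg :: "'a::field^'n^'n \<Rightarrow> bool" where
  "alternating_nondeg J \<longleftrightarrow> transpose J = - J \<and> (\<forall>i. J$i$i = 0) \<and> invertible J"

definition GSp :: "'a::field^'n^'n \<Rightarrow> ('a^'n^'n) set" where
  "GSp J = {M. invertible M \<and> (\<exists>k. k \<noteq> 0 \<and> transpose M ** J ** M = mat k ** J)}"

definition multiplier :: "'a::field^'n^'n \<Rightarrow> 'a^'n^'n \<Rightarrow> 'a" where
  "multiplier J M = (THE k. transpose M ** J ** M = mat k ** J)"

definition Sp :: "'a::field^'n^'n \<Rightarrow> ('a^'n^'n) set" where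
  "Sp J = {M \<in> GSp J. multiplier J M = 1}"

definition matrix_subgroup :: "('a::field^'n^'n) set \<Rightarrow> bool" where
  "matrix_subgroup G \<longleftrightarrow> G \<subseteq> {M. invertible M} \<and> mat 1 \<in> G
     \<and> (\<forall>A\<in>G. \<forall>B\<in>G. A ** B \<in> G) \<and> (\<forall>A\<in>G. matrix_inv A \<in> G)"

definition invariant_subspace :: "('a::field^'n^'n) set \<Rightarrow> ('a^'n) set \<Rightarrow> bool" where
  "invariant_subspace G W \<longleftrightarrow> vec.subspace W \<and> (\<forall>M\<in>G. \<forall>w\<in>W. M *v w \<in> W)"

definition acts_irreducibly :: "('a::field^'n^'n) set \<Rightarrow> bool" where
  "acts_irreducibly G \<longleftrightarrow> (\<forall>W. invariant_subspace G W \<longrightarrow> W = {0} \<or> W = UNIV)"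

definition has_eigenvalue :: "'a::field^'n^'n \<Rightarrow> bool" where
  "has_eigenvalue M \<longleftrightarrow> (\<exists>c v. v \<noteq> 0 \<and> M *v v = c *s v)"

definition Hasse :: "('a::field^'n^'n) set \<Rightarrow> bool" where
  "Hasse G \<longleftrightarrow> acts_irreducibly G \<and> (\<forall>M\<in>G. has_eigenvalue M)"

definition maximal_Hasse_in :: "('a::field^'n^'n) set \<Rightarrow> ('a^'n^'n) set \<Rightarrow> bool" where
  "maximal_Hasse_in A G \<longleftrightarrow> matrix_subgroup G \<and> G \<subseteq> A \<and> Hasse G \<and>
     (\<forall>H. matrix_subgroup H \<and> H \<subseteq> A \<and> Hasse H \<and> G \<subseteq> H \<longrightarrow> H = G)"

end

theory Submission
  imports Defs
begin


lemma mat_left: "(mat c :: 'a::comm_semiring_1^'n^'n) ** A = (\<chi> i j. c * A$i$j)"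
  by (simp add: vec_eq_iff matrix_matrix_mult_def mat_def if_distrib if_distribR sum.delta' cong: if_cong)

lemma mat_right: "(A :: 'a::comm_semiring_1^'n^'m) ** mat c = (\<chi> i j. c * A$i$j)"
  by (simp add: vec_eq_iff matrix_matrix_mult_def mat_def if_distrib if_distribR sum.delta' mult.commute cong: if_cong)

lemma mat_mul_mat: "(mat a :: 'a::comm_semiring_1^'n^'n) ** mat b = mat (a*b)"
  by (simp only: mat_left) (simp add: vec_eq_iff mat_def)

lemma mat_comm: "(mat c :: 'a::comm_semiring_1^'n^'n) ** A = A ** mat c"
  by (simp add: mat_left mat_right)

lemma mat_vec: "(mat c :: 'a::comm_semiring_1^'n^'n) *v x = c *s x"
  by (simp add: vec_eq_iff matrix_vector_mult_def mat_def if_distrib if_distribR sum.delta' cong: if_cong)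

lemma mat_right_mult: "(A::'a::comm_semiring_1^'n^'n) ** (mat c ** (B::'a^'p^'n)) = mat c ** (A ** B)"
proof -
  have "A ** (mat c ** B) = (A ** mat c) ** B" by (rule matrix_mul_assoc)
  also have "\<dots> = (mat c ** A) ** B" by (simp only: mat_comm)
  also have "\<dots> = mat c ** (A ** B)" by (rule matrix_mul_assoc[symmetric])
  finally show ?thesis .
qed

lemma mat_prod: "((mat c :: 'a::comm_semiring_1^'n^'n) ** (A::'a^'n^'n)) ** (mat d ** (B::'a^'p^'n)) = mat (c*d) ** (A ** B)"
proof -
  have "(mat c ** A) ** (mat d ** B) = mat c ** (A ** (mat d ** B))" by (rule matrix_mul_assoc[symmetric])
  also have "\<dots> = mat c ** (mat d ** (A ** B))" using mat_right_mult[of A d B] by simp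
  also have "\<dots> = (mat c ** mat d) ** (A ** B)" by (rule matrix_mul_assoc)
  also have "\<dots> = mat (c*d) ** (A ** B)" by (simp only: mat_mul_mat)
  finally show ?thesis .
qed

lemma mat_inj: "(mat a :: 'a::comm_semiring_1^'n^'n) = mat b \<Longrightarrow> a = b"
proof -
  assume "(mat a :: 'a::comm_semiring_1^'n^'n) = mat b"
  hence "(mat a :: 'a::comm_semiring_1^'n^'n) $ i $ i = (mat b :: 'a::comm_semiring_1^'n^'n) $ i $ i" for i by simp
  thus "a = b" by (simp add: mat_def)
qed

lemma inv_unique:
  fixes A :: "'a::field^'n^'n"
  assumes "A ** B = mat 1" shows "matrix_inv A = B"
proof -
  have BA: "B ** A = mat 1" using assms matrix_left_right_inverse by blast
  have "A ** matrix_inv A = mat 1 \<and> matrix_inv A ** A = mat 1"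
    unfolding matrix_inv_def by (rule someI[of _ B]) (use assms BA in auto)
  then have "matrix_inv A ** A = mat 1" by blast
  have "matrix_inv A = matrix_inv A ** (A ** B)" using assms by simp
  also have "\<dots> = (matrix_inv A ** A) ** B" by (rule matrix_mul_assoc)
  also have "\<dots> = B" using \<open>matrix_inv A ** A = mat 1\<close> by simp
  finally show ?thesis .
qed

lemma inv_props:
  fixes A :: "'a::field^'n^'n"
  assumes "invertible A" shows "A ** matrix_inv A = mat 1" "matrix_inv A ** A = mat 1"
proof -
  obtain B where AB: "A ** B = mat 1" using assms invertible_def by blast
  have "matrix_inv A = B" by (rule inv_unique[OF AB])
  with AB show "A ** matrix_inv A = mat 1" by simp
  then show "matrix_inv A ** A = mat 1" using matrix_left_right_inverse by blast
qed

lemma mult_unique: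
  fixes J :: "'a::field^'n^'n"
  assumes "invertible J" "transpose M ** J ** M = mat k ** J"
  shows "multiplier J M = k"
  unfolding multiplier_def
proof (rule the_equality)
  show "transpose M ** J ** M = mat k ** J" by fact
  fix k' assume "transpose M ** J ** M = mat k' ** J"
  hence "mat k' ** J ** matrix_inv J = mat k ** J ** matrix_inv J" using assms by simp
  moreover have "mat x ** J ** matrix_inv J = mat x" for x
  proof -
    have "mat x ** J ** matrix_inv J = mat x ** (J ** matrix_inv J)" by (rule matrix_mul_assoc[symmetric])
    also have "\<dots> = mat x" using inv_props(1)[OF assms(1)] by simp
    finally show ?thesis .
  qed
  ultimately have "(mat k' :: 'a^'n^'n) = mat k" by simp
  thus "k' = k" by (rule mat_inj)
qed

lemma GSp_mult:
  fixes J :: "'a::field^'n^'n"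
  assumes "invertible J" "M \<in> GSp J"
  shows "transpose M ** J ** M = mat (multiplier J M) ** J" "multiplier J M \<noteq> 0"
proof -
  obtain k where "k \<noteq> 0" "transpose M ** J ** M = mat k ** J" using assms(2) by (auto simp: GSp_def)
  with mult_unique[OF assms(1)] show "transpose M ** J ** M = mat (multiplier J M) ** J" "multiplier J M \<noteq> 0"
    by auto
qed

lemma mult_prod:
  fixes J :: "'a::field^'n^'n"
  assumes "invertible J" "transpose A ** J ** A = mat a ** J" "transpose B ** J ** B = mat b ** J"
  shows "transpose (A ** B) ** J ** (A ** B) = mat (a*b) ** J"
proof -
  have "transpose (A ** B) ** J ** (A ** B) = transpose B ** (transpose A ** J ** A) ** B"
    by (simp add: matrix_transpose_mul matrix_mul_assoc)
  also have "\<dots> = transpose B ** (mat a ** J) ** B" by (simp only: assms(2))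
  also have "\<dots> = transpose B ** ((mat a ** J) ** B)" by (simp only: matrix_mul_assoc)
  also have "\<dots> = transpose B ** (mat a ** (J ** B))" by (simp only: matrix_mul_assoc)
  also have "\<dots> = mat a ** (transpose B ** (J ** B))" by (rule mat_right_mult)
  also have "\<dots> = mat a ** (transpose B ** J ** B)" by (simp only: matrix_mul_assoc)
  also have "\<dots> = mat a ** (mat b ** J)" by (simp only: assms(3))
  also have "\<dots> = mat (a*b) ** J" by (simp add: matrix_mul_assoc mat_mul_mat)
  finally show ?thesis .
qed

lemma mat_in_GSp:
  fixes J :: "'a::field^'n^'n"
  assumes "c \<noteq> 0"
  shows "transpose (mat c) ** J ** mat c = mat (c*c) ** J" "invertible (mat c :: 'a^'n^'n)"
proof -
  show "transpose (mat c) ** J ** mat c = mat (c*c) ** J"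
  proof -
    have "transpose (mat c) ** J ** mat c = mat c ** (J ** mat c)" by (simp add: matrix_mul_assoc)
    also have "\<dots> = mat c ** (mat c ** J)" by (simp only: mat_comm)
    also have "\<dots> = mat (c*c) ** J" by (simp add: matrix_mul_assoc mat_mul_mat)
    finally show ?thesis .
  qed
  have "mat c ** mat (inverse c) = (mat 1 :: 'a^'n^'n)" using assms by (simp add: mat_mul_mat)
  thus "invertible (mat c :: 'a^'n^'n)" using invertible_right_inverse by blast
qed


lemma sq_lemma:
  fixes m k :: "'a::{field,finite}"
  assumes m0: "m \<noteq> 0" and k0: "k \<noteq> 0" and mn: "\<forall>x. m \<noteq> x*x" and kn: "\<forall>x. k \<noteq> x*x"
  shows "\<exists>d. d \<noteq> 0 \<and> k = m*(d*d)"
proof -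
  define U where "U = {x::'a. x \<noteq> 0}"
  define S where "S = (\<lambda>x. x*x) ` U"
  define r where "r s = (SOME x. x \<in> U \<and> x*x = s)" for s
  have SU: "S \<subseteq> U" unfolding S_def U_def by auto
  have r: "r s \<in> U \<and> r s * r s = s" if "s \<in> S" for s
  proof -
    from that obtain x where "x \<in> U" "x*x = s" unfolding S_def by auto
    thus ?thesis unfolding r_def by (rule someI[of "\<lambda>x. x \<in> U \<and> x*x = s", OF conjI])
  qed
  have "U \<subseteq> r ` S \<union> uminus ` r ` S"
  proof
    fix u assume u: "u \<in> U"
    hence s: "u*u \<in> S" unfolding S_def by auto
    from r[OF s] have "r (u*u) * r (u*u) = u*u" by blast
    hence "(r (u*u) - u) * (r (u*u) + u) = 0" by (simp add: algebra_simps)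
    hence "r (u*u) - u = 0 \<or> r (u*u) + u = 0" by simp
    hence "u = r (u*u) \<or> u = - r (u*u)" by (metis add_eq_0_iff right_minus_eq)
    thus "u \<in> r ` S \<union> uminus ` r ` S" using s by blast
  qed
  hence "card U \<le> card (r ` S \<union> uminus ` r ` S)" by (intro card_mono) simp_all
  also have "\<dots> \<le> card (r ` S) + card (uminus ` r ` S)" by (rule card_Un_le)
  also have "\<dots> \<le> card S + card S"
  proof -
    have a: "card (r ` S) \<le> card S" by (rule card_image_le) simp
    have "card (uminus ` r ` S) \<le> card (r ` S)" by (rule card_image_le) simp
    with a show ?thesis by linarith
  qed
  finally have c1: "card U \<le> card S + card S" .
  define N where "N = U - S"
  have cN: "card N = card U - card S" unfolding N_def using SU by (simp add: card_Diff_subset)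
  define T where "T = (\<lambda>y. m*y) ` S"
  have cT: "card T = card S" unfolding T_def using m0 by (simp add: card_image inj_on_def)
  have sub: "T \<subseteq> N"
  proof
    fix y assume "y \<in> T"
    then obtain x where x: "x \<in> U" "y = m*(x*x)" unfolding T_def S_def by blast
    have "y \<in> U" using x m0 unfolding U_def by simp
    moreover have "y \<notin> S"
    proof
      assume "y \<in> S"
      then obtain z where "y = z*z" unfolding S_def by blast
      hence "m*(x*x) = z*z" using x by simp
      moreover have "x*x \<noteq> 0" using x(1) unfolding U_def by simp
      ultimately have "m = (z*z)/(x*x)" by (simp add: eq_divide_eq)
      hence "m = (z/x)*(z/x)" by simp
      thus False using mn by blast
    qed
    ultimately show "y \<in> N" unfolding N_def by blast
  qed
  have "card N \<le> card T" using cN cT c1 by linarith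
  moreover have "card T \<le> card N" using sub by (intro card_mono) simp_all
  ultimately have "T = N" using sub by (intro card_subset_eq) simp_all
  moreover have "k \<in> N" unfolding N_def U_def S_def using k0 kn by blast
  ultimately obtain d where "d \<in> U" "k = m*(d*d)" unfolding T_def S_def by blast
  thus ?thesis unfolding U_def by blast
qed

theorem lemma4p5:
  fixes J :: "'a::{field,finite}^4^4" and G :: "('a^4^4) set"
  assumes "prime CARD('a)"
    and "alternating_nondeg J"
    and "maximal_Hasse_in (GSp J) G"
    and "\<not> acts_irreducibly (G \<inter> Sp J)"
  shows "multiplier J ` G = {k. k \<noteq> 0}"
proof -
  have Jinv: "invertible J" using assms(2) unfolding alternating_nondeg_def by blast
  have sg: "matrix_subgroup G" and GG: "G \<subseteq> GSp J" and hasse: "Hasse G"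
    and mx: "\<And>H. matrix_subgroup H \<Longrightarrow> H \<subseteq> GSp J \<Longrightarrow> Hasse H \<Longrightarrow> G \<subseteq> H \<Longrightarrow> H = G"
    using assms(3) unfolding maximal_Hasse_in_def by blast+
  have Ginv: "\<And>A. A \<in> G \<Longrightarrow> invertible A" and G1: "mat 1 \<in> G"
    and Gmul: "\<And>A B. A \<in> G \<Longrightarrow> B \<in> G \<Longrightarrow> A ** B \<in> G"
    and Gi: "\<And>A. A \<in> G \<Longrightarrow> matrix_inv A \<in> G"
    using sg unfolding matrix_subgroup_def by blast+
  have irr: "acts_irreducibly G" and eig: "\<And>M. M \<in> G \<Longrightarrow> has_eigenvalue M"
    using hasse unfolding Hasse_def by blast+
  define H where "H = {mat c ** M | c M. c \<noteq> 0 \<and> M \<in> G}"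
  have Hin: "mat c ** M \<in> H" if "c \<noteq> 0" "M \<in> G" for c M unfolding H_def using that by blast
  have GH: "G \<subseteq> H"
  proof
    fix M assume "M \<in> G"
    hence "mat 1 ** M \<in> H" using Hin[of 1 M] by simp
    thus "M \<in> H" by simp
  qed
  have "matrix_subgroup H"
    unfolding matrix_subgroup_def
  proof (intro conjI ballI)
    show "H \<subseteq> {M. invertible M}"
    proof
      fix A assume "A \<in> H"
      then obtain c M where c: "c \<noteq> 0" "M \<in> G" "A = mat c ** M" unfolding H_def by blast
      show "A \<in> {M. invertible M}" using invertible_mult[OF mat_in_GSp(2)[OF c(1)] Ginv[OF c(2)]] c(3) by simp
    qed
    show "mat 1 \<in> H" using GH G1 by blast
  next
    fix A B assume "A \<in> H" "B \<in> H"
    then obtain c d A' B' where "c \<noteq> 0" "d \<noteq> 0" "A' \<in> G" "B' \<in> G" "A = mat c ** A'" "B = mat d ** B'"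
      unfolding H_def by blast
    thus "A ** B \<in> H" by (simp add: mat_prod Gmul Hin)
  next
    fix A assume "A \<in> H"
    then obtain c A' where c: "c \<noteq> 0" "A' \<in> G" "A = mat c ** A'" unfolding H_def by blast
    have "A ** (mat (inverse c) ** matrix_inv A') = mat (c * inverse c) ** (A' ** matrix_inv A')"
      using c(3) mat_prod[of c A' "inverse c" "matrix_inv A'"] by simp
    also have "\<dots> = mat 1" using c inv_props(1)[OF Ginv[OF c(2)]] by simp
    finally have "matrix_inv A = mat (inverse c) ** matrix_inv A'" by (rule inv_unique)
    thus "matrix_inv A \<in> H" using c Gi Hin by simp
  qed
  moreover have "H \<subseteq> GSp J"
  proof
    fix A assume "A \<in> H"
    then obtain c M where c: "c \<noteq> 0" "M \<in> G" "A = mat c ** M" unfolding H_def by blast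
    have MG: "M \<in> GSp J" using c GG by blast
    have "transpose A ** J ** A = mat (c*c*multiplier J M) ** J"
      using c mult_prod[OF Jinv mat_in_GSp(1)[OF c(1)] GSp_mult(1)[OF Jinv MG]] by simp
    moreover have "c*c*multiplier J M \<noteq> 0" using c GSp_mult(2)[OF Jinv MG] by simp
    moreover have "invertible A" using invertible_mult[OF mat_in_GSp(2)[OF c(1)] Ginv[OF c(2)]] c(3) by simp
    ultimately show "A \<in> GSp J" unfolding GSp_def by blast
  qed
  moreover have "Hasse H" unfolding Hasse_def
  proof (intro conjI ballI)
    show "acts_irreducibly H" unfolding acts_irreducibly_def
    proof (intro allI impI)
      fix W assume "invariant_subspace H W"
      hence "invariant_subspace G W" using GH unfolding invariant_subspace_def by blast
      thus "W = {0} \<or> W = UNIV" using irr unfolding acts_irreducibly_def by blast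
    qed
  next
    fix A assume "A \<in> H"
    then obtain c M where c: "c \<noteq> 0" "M \<in> G" "A = mat c ** M" unfolding H_def by blast
    obtain a v where v: "v \<noteq> 0" "M *v v = a *s v" using eig[OF c(2)] unfolding has_eigenvalue_def by blast
    have "A *v v = mat c *v (M *v v)" using c by (simp add: matrix_vector_mul_assoc)
    also have "\<dots> = (c*a) *s v" using v by (simp add: mat_vec)
    finally show "has_eigenvalue A" unfolding has_eigenvalue_def using v by blast
  qed
  ultimately have HG: "H = G" using mx GH by blast
  have matG: "mat c \<in> G" if "c \<noteq> 0" for c
  proof -
    have "mat c ** mat 1 \<in> H" using Hin that G1 by blast
    thus ?thesis using HG by simp
  qed
  have lam_mat: "multiplier J (mat c) = c*c" if "c \<noteq> 0" for c
    using mult_unique[OF Jinv mat_in_GSp(1)[OF that]] .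
  have lam_prod: "multiplier J (A ** B) = multiplier J A * multiplier J B" if "A \<in> G" "B \<in> G" for A B
    using mult_unique[OF Jinv mult_prod[OF Jinv GSp_mult(1)[OF Jinv subsetD[OF GG that(1)]] GSp_mult(1)[OF Jinv subsetD[OF GG that(2)]]]] .
  have Gnz: "multiplier J M \<noteq> 0" if "M \<in> G" for M
    using GSp_mult(2)[OF Jinv subsetD[OF GG that]] .
  have sub1: "multiplier J ` G \<subseteq> {k. k \<noteq> 0}" using Gnz by (simp add: image_subset_iff)
  show ?thesis
  proof (rule ccontr)
    assume "multiplier J ` G \<noteq> {k. k \<noteq> 0}"
    then obtain k where k0: "k \<noteq> 0" and kn: "k \<notin> multiplier J ` G" using sub1 by blast
    have ksq: "\<forall>x. k \<noteq> x*x"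
    proof
      fix x show "k \<noteq> x*x"
      proof
        assume kx: "k = x*x"
        hence "x \<noteq> 0" using k0 by auto
        hence "multiplier J (mat x) = k" "mat x \<in> G" using lam_mat matG kx by auto
        thus False using kn by blast
      qed
    qed
    have sq: "\<exists>c. c \<noteq> 0 \<and> multiplier J g = c*c" if g: "g \<in> G" for g
    proof (rule ccontr)
      assume nsq: "\<not> ?thesis"
      have m0: "multiplier J g \<noteq> 0" using Gnz g by blast
      have "\<forall>x. multiplier J g \<noteq> x*x"
      proof (intro allI notI)
        fix x assume "multiplier J g = x*x"
        with nsq m0 show False by (cases "x = 0") auto
      qed
      then obtain d where d: "d \<noteq> 0" "k = multiplier J g * (d*d)"
        using sq_lemma[OF m0 k0 _ ksq] by blast
      have "multiplier J (g ** mat d) = k" using lam_prod[OF g matG[OF d(1)]] lam_mat[OF d(1)] d by simp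
      moreover have "g ** mat d \<in> G" using Gmul g matG d by blast
      ultimately show False using kn by blast
    qed
    have "acts_irreducibly (G \<inter> Sp J)" unfolding acts_irreducibly_def
    proof (intro allI impI)
      fix W assume W: "invariant_subspace (G \<inter> Sp J) W"
      have "invariant_subspace G W" unfolding invariant_subspace_def
      proof (intro conjI ballI)
        show sW: "vec.subspace W" using W unfolding invariant_subspace_def by blast
        fix g w assume g: "g \<in> G" and w: "w \<in> W"
        obtain c where c: "c \<noteq> 0" "multiplier J g = c*c" using sq[OF g] by blast
        define h where "h = mat (inverse c) ** g"
        have hG: "h \<in> G" unfolding h_def using Gmul matG c g by simp
        have "multiplier J h = 1" unfolding h_def using lam_prod[OF matG g] lam_mat c by (simp add: field_simps)
        hence "h \<in> Sp J" using hG GG unfolding Sp_def by blast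
        hence hw: "h *v w \<in> W" using W hG w unfolding invariant_subspace_def by blast
        have "mat c ** h = mat (c * inverse c) ** g" unfolding h_def by (simp add: matrix_mul_assoc mat_mul_mat)
        hence "g = mat c ** h" using c by simp
        hence "g *v w = c *s (h *v w)" by (simp add: matrix_vector_mul_assoc[symmetric] mat_vec)
        thus "g *v w \<in> W" using vec.subspace_scale[OF sW hw] by simp
      qed
      thus "W = {0} \<or> W = UNIV" using irr unfolding acts_irreducibly_def by blast
    qed
    thus False using assms(4) by blast
  qed
qed

end
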